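(* Let $t>1$ be an integer and let $A$ be a connected $Gt$-NEDB graph with constant $\acute{\gamma}_A$ and diameter $d$. Then $d-1\le t\,\acute{\gamma}_A$.
   Context: All graphs are finite, simple, undirected. $d_A(u,v)$ is the shortest-path distance in $A$; for a vertex $v$ and an edge $f'=\alpha'\beta'$, $d_A(v,f')=\min\{d_A(v,\alpha'),d_A(v,\beta')\}$. For an edge $f=\alpha\beta$, $m^A_\alpha(f)$ is the number of edges $f'\in E(A)$ with $d_A(\alpha,f')<d_A(\beta,f')$, and $m^A_\beta(f)$ is defined symmetrically. For an integer $t>1$, a connected graph $A$ is generalized $t$-nicely edge distance-balanced ($Gt$-NEDB) if there is a positive integer $\acute{\gamma}_A$ such that every edge $f$ has its endpoints labelled $\alpha,\beta$ with $m^A_\alpha(f)=t\,m^A_\beta(f)$ and $m^A_\beta(f)=\acute{\gamma}_A$. *)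

theory Defs
  imports Main
begin

definition simple_graph :: "'a set \<Rightarrow> 'a set set \<Rightarrow> bool" where
  "simple_graph V E \<longleftrightarrow> finite V \<and> (\<forall>e\<in>E. \<exists>u v. e = {u, v} \<and> u \<in> V \<and> v \<in> V \<and> u \<noteq> v)"

definition is_walk :: "'a set \<Rightarrow> 'a set set \<Rightarrow> 'a list \<Rightarrow> bool" where
  "is_walk V E p \<longleftrightarrow> p \<noteq> [] \<and> set p \<subseteq> V \<and> (\<forall>i. Suc i < length p \<longrightarrow> {p ! i, p ! Suc i} \<in> E)"

definition connected_graph :: "'a set \<Rightarrow> 'a set set \<Rightarrow> bool" where
  "connected_graph V E \<longleftrightarrow> V \<noteq> {} \<and>
     (\<forall>u\<in>V. \<forall>v\<in>V. \<exists>p. is_walk V E p \<and> hd p = u \<and> last p = v)"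

definition gdist :: "'a set \<Rightarrow> 'a set set \<Rightarrow> 'a \<Rightarrow> 'a \<Rightarrow> nat" where
  "gdist V E u v = (LEAST n. \<exists>p. is_walk V E p \<and> hd p = u \<and> last p = v \<and> length p = Suc n)"

definition gdist_edge :: "'a set \<Rightarrow> 'a set set \<Rightarrow> 'a \<Rightarrow> 'a set \<Rightarrow> nat" where
  "gdist_edge V E v f = Min (gdist V E v ` f)"

text \<open>m_alpha(f) for f = alpha beta: edges strictly closer to alpha than to beta.\<close>
definition m_edge :: "'a set \<Rightarrow> 'a set set \<Rightarrow> 'a \<Rightarrow> 'a \<Rightarrow> nat" where
  "m_edge V E \<alpha> \<beta> = card {f'\<in>E. gdist_edge V E \<alpha> f' < gdist_edge V E \<beta> f'}"

definition diameter :: "'a set \<Rightarrow> 'a set set \<Rightarrow> nat" where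
  "diameter V E = Max {gdist V E u v | u v. u \<in> V \<and> v \<in> V}"

definition gt_nedb :: "'a set \<Rightarrow> 'a set set \<Rightarrow> nat \<Rightarrow> nat \<Rightarrow> bool" where
  "gt_nedb V E t \<gamma> \<longleftrightarrow> connected_graph V E \<and> \<gamma> > 0 \<and>
     (\<forall>f\<in>E. \<exists>\<alpha> \<beta>. f = {\<alpha>, \<beta>} \<and> m_edge V E \<alpha> \<beta> = t * m_edge V E \<beta> \<alpha> \<and> m_edge V E \<beta> \<alpha> = \<gamma>)"

end

theory Submission
  imports Defs
begin

lemma walk_take: "is_walk V E p \<Longrightarrow> 0 < n \<Longrightarrow> is_walk V E (take n p)"
  unfolding is_walk_def using set_take_subset[of n p] by auto

lemma walk_drop: "is_walk V E p \<Longrightarrow> n < length p \<Longrightarrow> is_walk V E (drop n p)"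
  unfolding is_walk_def using set_drop_subset[of n p] by auto

lemma gdist_le: "is_walk V E p \<Longrightarrow> hd p = u \<Longrightarrow> last p = v \<Longrightarrow> gdist V E u v \<le> length p - 1"
  unfolding gdist_def
  by (rule Least_le) (auto simp: is_walk_def)

lemma gdist_walk: "is_walk V E p \<Longrightarrow> hd p = u \<Longrightarrow> last p = v \<Longrightarrow>
   \<exists>q. is_walk V E q \<and> hd q = u \<and> last q = v \<and> length q = Suc (gdist V E u v)"
  unfolding gdist_def
  by (rule LeastI_ex) (rule exI[of _ "length p - 1"], rule exI[of _ p], auto simp: is_walk_def)

lemma walk_append: assumes "is_walk V E q" "is_walk V E r" "last q = hd r"
  shows "is_walk V E (q @ tl r)"
proof -
  have qne: "q \<noteq> []" and rne: "r \<noteq> []" using assms by (auto simp: is_walk_def)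
  have "set (tl r) \<subseteq> set r" using rne by (cases r) auto
  hence s: "set (q @ tl r) \<subseteq> V" using assms by (auto simp: is_walk_def)
  have e: "{(q @ tl r) ! i, (q @ tl r) ! Suc i} \<in> E" if "Suc i < length (q @ tl r)" for i
  proof -
    consider "Suc i < length q" | "Suc i = length q" | "Suc i > length q" by linarith
    then show ?thesis
    proof cases
      case 1 then show ?thesis using assms(1) by (auto simp: is_walk_def nth_append)
    next
      case 2
      have "(q @ tl r) ! i = last q" proof -
        have "i = length q - 1" using 2 by simp
        then show ?thesis using qne by (simp add: nth_append last_conv_nth)
      qed
      also have "\<dots> = r ! 0" using assms(3) rne by (simp add: hd_conv_nth)
      finally have a: "(q @ tl r) ! i = r ! 0" .
      have "(q @ tl r) ! Suc i = tl r ! 0" using 2 by (simp add: nth_append)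
      also have "\<dots> = r ! 1" using rne by (cases r) auto
      finally have b: "(q @ tl r) ! Suc i = r ! Suc 0" by simp
      have "Suc 0 < length r" using that 2 rne by (cases r) auto
      then show ?thesis using a b assms(2) by (auto simp: is_walk_def)
    next
      case 3
      define k where "k = i - length q"
      have i: "i = length q + k" using 3 k_def by simp
      have a: "(q @ tl r) ! i = r ! Suc k" using i rne by (cases r) (auto simp: nth_append)
      have b: "(q @ tl r) ! Suc i = r ! Suc (Suc k)" using i rne by (cases r) (auto simp: nth_append)
      have "Suc (Suc k) < length r" using that i rne by (cases r) auto
      then show ?thesis using a b assms(2) by (auto simp: is_walk_def)
    qed
  qed
  show ?thesis using s e qne by (auto simp: is_walk_def)
qed

lemma last_take_Suc: "j < length p \<Longrightarrow> last (take (Suc j) p) = p ! j"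
proof -
  assume a: "j < length p"
  hence "take (Suc j) p \<noteq> []" by (cases p) auto
  then show ?thesis using a by (auto simp add: last_conv_nth min_def intro: arg_cong[where f="(!) p"])
qed

lemma gdist_edge_pair: "gdist_edge V E a {b, c} = min (gdist V E a b) (gdist V E a c)"
  by (simp add: gdist_edge_def)

theorem lemma4p2:
  fixes V :: "'a set" and E :: "'a set set" and t \<gamma> d :: nat
  assumes "simple_graph V E"
    and "t > 1"
    and "connected_graph V E"
    and "gt_nedb V E t \<gamma>"
    and "d = diameter V E"
  shows "int d - 1 \<le> int t * int \<gamma>"
proof (cases "d = 0")
  case True then show ?thesis by (simp add: order_trans[of _ 0])
next
  case False
  have finV: "finite V" using assms(1) by (simp add: simple_graph_def)
  have "E \<subseteq> Pow V" using assms(1) by (auto simp: simple_graph_def)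
  hence finE: "finite E" using finV by (meson finite_Pow_iff finite_subset)
  have Vne: "V \<noteq> {}" using assms(3) by (simp add: connected_graph_def)
  let ?S = "{gdist V E u v | u v. u \<in> V \<and> v \<in> V}"
  have "?S = (\<lambda>(u,v). gdist V E u v) ` (V \<times> V)" by auto
  hence finS: "finite ?S" using finV by simp
  have "?S \<noteq> {}" using Vne by auto
  hence "d \<in> ?S" using finS Max_in assms(5) unfolding diameter_def by blast
  then obtain u v where uv: "u \<in> V" "v \<in> V" "gdist V E u v = d" by auto
  obtain p0 where "is_walk V E p0" "hd p0 = u" "last p0 = v"
    using assms(3) uv unfolding connected_graph_def by blast
  then obtain p where p: "is_walk V E p" "hd p = u" "last p = v" "length p = Suc d"
    using gdist_walk uv(3) by metis
  have pne: "p \<noteq> []" using p by auto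
  define x where "x i = p ! i" for i
  have x0: "x 0 = u" using p pne by (simp add: x_def hd_conv_nth)
  have far: "j \<le> gdist V E (x 0) (x j)" if "j \<le> d" for j
  proof (rule ccontr)
    assume "\<not> ?thesis"
    hence lt: "gdist V E (x 0) (x j) < j" by simp
    have "is_walk V E (take (Suc j) p)" using p walk_take by auto
    moreover have "hd (take (Suc j) p) = x 0" using pne by (simp add: x_def hd_conv_nth)
    moreover have "last (take (Suc j) p) = x j" using that p
      by (simp add: x_def last_take_Suc)
    ultimately obtain q where q: "is_walk V E q" "hd q = x 0" "last q = x j"
      "length q = Suc (gdist V E (x 0) (x j))" using gdist_walk by metis
    have r: "is_walk V E (drop j p)" using p that by (intro walk_drop) auto
    have hr: "hd (drop j p) = x j" using p that by (simp add: x_def hd_drop_conv_nth)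
    have w: "is_walk V E (q @ tl (drop j p))" using walk_append[OF q(1) r] q(3) hr by simp
    have "hd (q @ tl (drop j p)) = u" using q x0 w by (auto simp: is_walk_def)
    moreover have "last (q @ tl (drop j p)) = v"
    proof (cases "tl (drop j p) = []")
      case True
      hence "length (drop j p) = 1" using p that by (cases "drop j p") auto
      hence "j = d" using p by simp
      then show ?thesis using True q(3) p pne by (simp add: x_def last_conv_nth)
    next
      case False
      have "last (tl (drop j p)) = last (drop j p)" using False by (cases "drop j p") auto
      also have "\<dots> = v" using p that by simp
      finally show ?thesis using False by simp
    qed
    ultimately have "gdist V E u v \<le> length (q @ tl (drop j p)) - 1" using w gdist_le by metis
    also have "\<dots> = gdist V E (x 0) (x j) + d - j" using q p that by simp
    finally show False using lt uv(3) that by linarith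
  qed
  have near: "gdist V E (x 1) (x j) \<le> j - 1" if "1 \<le> j" "j \<le> d" for j
  proof -
    let ?w = "drop 1 (take (Suc j) p)"
    have "is_walk V E ?w" using p that by (intro walk_drop walk_take) auto
    moreover have "hd ?w = x 1" using p that by (simp add: x_def hd_drop_conv_nth)
    moreover have "last ?w = x j" using p that by (simp add: x_def last_take_Suc)
    ultimately have "gdist V E (x 1) (x j) \<le> length ?w - 1" using gdist_le by metis
    then show ?thesis using p that by simp
  qed
  have inj: "inj_on x {..d}"
  proof (rule inj_onI)
    fix i j assume ij: "i \<in> {..d}" "j \<in> {..d}" "x i = x j"
    have k: "k \<le> d \<Longrightarrow> gdist V E (x 0) (x k) \<le> k" for k
    proof -
      assume kd: "k \<le> d"
      have "is_walk V E (take (Suc k) p)" using p walk_take by auto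
      moreover have "hd (take (Suc k) p) = x 0" using pne by (simp add: x_def hd_conv_nth)
      moreover have "last (take (Suc k) p) = x k" using kd p by (simp add: x_def last_take_Suc)
      ultimately show ?thesis using gdist_le[of V E "take (Suc k) p"] p kd by fastforce
    qed
    show "i = j"
    proof (rule ccontr)
      assume "i \<noteq> j"
      then consider "i < j" | "j < i" by linarith
      then show False
      proof cases
        case 1 then show ?thesis using k[of i] far[of j] ij by auto
      next
        case 2 then show ?thesis using k[of j] far[of i] ij by auto
      qed
    qed
  qed
  define F where "F = (\<lambda>i. {x i, x (Suc i)}) ` {1..<d}"
  have injF: "inj_on (\<lambda>i. {x i, x (Suc i)}) {1..<d}"
  proof (rule inj_onI)
    fix i j assume ij: "i \<in> {1..<d}" "j \<in> {1..<d}" "{x i, x (Suc i)} = {x j, x (Suc j)}"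
    have "x i = x j \<or> x i = x (Suc j)" using ij(3) by blast
    hence "i = j \<or> i = Suc j" using inj ij(1,2) by (auto dest: inj_onD)
    moreover have "x j = x i \<or> x j = x (Suc i)" using ij(3) by blast
    hence "j = i \<or> j = Suc i" using inj ij(1,2) by (auto dest: inj_onD)
    ultimately show "i = j" by linarith
  qed
  have cardF: "card F = d - 1" using injF by (simp add: F_def card_image)
  have edge: "{x i, x (Suc i)} \<in> E" if "i < d" for i
    using p that by (auto simp: is_walk_def x_def)
  have sub: "F \<subseteq> {f'\<in>E. gdist_edge V E (x 1) f' < gdist_edge V E (x 0) f'}"
  proof
    fix f assume "f \<in> F"
    then obtain i where i: "1 \<le> i" "i < d" "f = {x i, x (Suc i)}" by (auto simp: F_def)
    have "gdist_edge V E (x 1) f \<le> i - 1" using near[of i] i by (simp add: gdist_edge_pair)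
    moreover have "i \<le> gdist_edge V E (x 0) f" using far[of i] far[of "Suc i"] i
      by (simp add: gdist_edge_pair)
    ultimately show "f \<in> {f'\<in>E. gdist_edge V E (x 1) f' < gdist_edge V E (x 0) f'}"
      using i edge by auto
  qed
  have "d - 1 \<le> m_edge V E (x 1) (x 0)"
    unfolding m_edge_def using card_mono[OF _ sub] finE cardF by simp
  moreover have "m_edge V E (x 1) (x 0) \<le> t * \<gamma>"
  proof -
    have "{x 0, x 1} \<in> E" using edge[of 0] False by simp
    then obtain a b where ab: "{x 0, x 1} = {a, b}" "m_edge V E a b = t * m_edge V E b a"
      "m_edge V E b a = \<gamma>" using assms(4) unfolding gt_nedb_def by blast
    have "x 0 \<noteq> x 1" using inj False by (auto dest: inj_onD)
    then have "(a = x 1 \<and> b = x 0) \<or> (a = x 0 \<and> b = x 1)" using ab(1) by (auto simp: doubleton_eq_iff)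
    then show ?thesis using ab assms(2) by auto
  qed
  ultimately have "d - 1 \<le> t * \<gamma>" by linarith
  hence "int (d - 1) \<le> int (t * \<gamma>)" by linarith
  then show ?thesis using False by (simp add: of_nat_diff)
qed

end
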